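(* Let $Q=\{q_1,\ldots,q_n\}\subset\mathbb{P}^1$ be distinct points and $\vec g=(g_1,\ldots,g_n)$ effective divisors on $[0,1)$ of common degree $r$, $g_i=\sum_\alpha m_i(\alpha)[\alpha]$, with $\sum_{i,\alpha}m_i(\alpha)\alpha\in\mathbb{Z}$. Suppose the defect is zero, $r(n-2)-\sum_i T(g_i)=\delta(\vec g)=0$, but the superdefect is strictly positive, $\sigma(\vec g)>0$. Then it is possible to choose good arrangements $a_{i,1},\ldots,a_{i,r}$ of the $g_i$ and an integer $k_1$ such that, defining $k_2,\ldots,k_r$ by $k_{j+1}=\tau_j+k_j+2-n$, the parabolic bundle $E=\bigoplus_{j=1}^rE^j$, $E^j=[k_j;a_{1,j},\ldots,a_{n,j}]$, has $\deg^{\rm par}(E)=0$.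
   Context: A parabolic line bundle $[k;a_1,\ldots,a_n]$ ($k\in\mathbb{Z}$, $a_i\in[0,1)$) is $\mathcal{O}(k)$ with weight $a_i$ at $q_i$; its parabolic degree is $k+\sum_ia_i$, additive in direct sums. An arrangement of $g_i$ is a sequence $a_{i,1},\ldots,a_{i,r}\in[0,1)$ in which each $\alpha$ occurs $m_i(\alpha)$ times; indices modulo $r$. It is good if $\#\{t: a_{i,t}\ge a_{i,t+1}\}$ is minimal, the minimum being $T(g_i)$. $\tau_j=\#\{i: a_{i,j}\geq a_{i,j+1}\}$. With $\nu(g_i)=\max_\alpha m_i(\alpha)$, the superdefect is $\sigma(\vec g)=\sum_i\bigl(r^2-\sum_\alpha m_i(\alpha)^2-r(r-\nu(g_i))\bigr)$. *)

theory Defs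
  imports Complex_Main "HOL-Library.Multiset"
begin

text \<open>An arrangement of a divisor D (a multiset of weights in [0,1)) is a list xs
  with mset xs = D; positions are 0..r-1 and taken cyclically modulo r = length xs.\<close>

definition descents :: "real list \<Rightarrow> nat" where
  "descents xs = card {t. t < length xs \<and> xs ! t \<ge> xs ! ((t + 1) mod length xs)}"

definition T_min :: "real multiset \<Rightarrow> nat" where
  "T_min D = Min (descents ` {xs. mset xs = D})"

definition good_arrangement :: "real multiset \<Rightarrow> real list \<Rightarrow> bool" where
  "good_arrangement D xs \<longleftrightarrow> mset xs = D \<and> descents xs = T_min D"

definition nu :: "real multiset \<Rightarrow> nat" where
  "nu D = (if D = {#} then 0 else Max (count D ` set_mset D))"

definition superdefect :: "nat \<Rightarrow> nat \<Rightarrow> (nat \<Rightarrow> real multiset) \<Rightarrow> int" where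
  "superdefect n r g = (\<Sum>i<n. int r ^ 2 - (\<Sum>\<alpha>\<in>set_mset (g i). int (count (g i) \<alpha>) ^ 2)
                               - int r * (int r - int (nu (g i))))"

definition defect :: "nat \<Rightarrow> nat \<Rightarrow> (nat \<Rightarrow> real multiset) \<Rightarrow> int" where
  "defect n r g = int r * (int n - 2) - (\<Sum>i<n. int (T_min (g i)))"

definition tau :: "nat \<Rightarrow> nat \<Rightarrow> (nat \<Rightarrow> real list) \<Rightarrow> nat \<Rightarrow> nat" where
  "tau n r a j = card {i. i < n \<and> a i ! j \<ge> a i ! ((j + 1) mod r)}"

definition par_deg_line :: "int \<Rightarrow> real list \<Rightarrow> real" where
  "par_deg_line k ws = of_int k + sum_list ws"

definition par_deg_sum :: "nat \<Rightarrow> nat \<Rightarrow> (nat \<Rightarrow> int) \<Rightarrow> (nat \<Rightarrow> real list) \<Rightarrow> real" where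
  "par_deg_sum n r k a = (\<Sum>j<r. par_deg_line (k j) (map (\<lambda>i. a i ! j) [0..<n]))"

end

theory Submission
  imports Defs "HOL-Number_Theory.Cong"
begin

definition DS :: "real list \<Rightarrow> nat set" where
  "DS xs = {t. t < length xs \<and> xs ! t \<ge> xs ! ((t + 1) mod length xs)}"

definition Qv :: "real list \<Rightarrow> nat" where
  "Qv xs = (\<Sum>t\<in>DS xs. t)"

lemma descents_DS: "descents xs = card (DS xs)"
  by (simp add: descents_def DS_def)

lemma DS_sub: "DS xs \<subseteq> {..<length xs}"
  by (auto simp: DS_def)

lemma finite_DS[simp]: "finite (DS xs)"
  using DS_sub finite_subset by blast

lemma chain_less:
  fixes xs :: "real list"
  assumes "s < s'" "s' < length xs" "\<forall>u. s \<le> u \<and> u < s' \<longrightarrow> xs ! u < xs ! Suc u"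
  shows "xs ! s < xs ! s'"
  using assms
proof (induction s')
  case 0 then show ?case by simp
next
  case (Suc s')
  show ?case
  proof (cases "s < s'")
    case True
    then have "xs ! s < xs ! s'" using Suc by auto
    also have "xs ! s' < xs ! Suc s'" using Suc.prems True by auto
    finally show ?thesis .
  next
    case False
    then have "s = s'" using Suc.prems by auto
    then show ?thesis using Suc.prems by auto
  qed
qed

lemma DS_nonempty:
  fixes xs :: "real list"
  assumes "xs \<noteq> []"
  shows "DS xs \<noteq> {}"
proof
  assume E: "DS xs = {}"
  let ?r = "length xs"
  have r: "?r > 0" using assms by simp
  have nd: "\<And>t. t < ?r \<Longrightarrow> xs ! t < xs ! ((t + 1) mod ?r)"
    using E by (auto simp: DS_def not_le)
  show False
  proof (cases "?r = 1")
    case True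
    then show ?thesis using nd[of 0] by simp
  next
    case False
    then have r2: "?r \<ge> 2" using r by linarith
    have ch: "\<forall>u. 0 \<le> u \<and> u < ?r - 1 \<longrightarrow> xs ! u < xs ! Suc u"
    proof (intro allI impI)
      fix u assume "0 \<le> u \<and> u < ?r - 1"
      then have "Suc u < ?r" by linarith
      then show "xs ! u < xs ! Suc u" using nd[of u] by simp
    qed
    have "xs ! 0 < xs ! (?r - 1)"
      by (rule chain_less) (use r2 ch in auto)
    moreover have "xs ! (?r - 1) < xs ! 0" using nd[of "?r - 1"] r by simp
    ultimately show False by simp
  qed
qed

lemma rot_mem:
  fixes xs :: "real list"
  assumes "t < length xs"
  shows "t \<in> DS (rotate p xs) \<longleftrightarrow> (t + p) mod length xs \<in> DS xs"
proof -
  let ?r = "length xs"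
  have r: "?r > 0" using assms by linarith
  have a: "rotate p xs ! t = xs ! ((t + p) mod ?r)"
    using assms by (simp add: nth_rotate add.commute)
  have b: "rotate p xs ! ((t + 1) mod ?r) = xs ! (((t + p) mod ?r + 1) mod ?r)"
  proof -
    have "rotate p xs ! ((t + 1) mod ?r) = xs ! ((p + (t + 1) mod ?r) mod ?r)"
      using r by (simp add: nth_rotate)
    also have "(p + (t + 1) mod ?r) mod ?r = ((t + p) mod ?r + 1) mod ?r"
      by (simp add: mod_simps add.commute add.left_commute)
    finally show ?thesis .
  qed
  have ne: "xs \<noteq> []" using r by auto
  show ?thesis using assms r a b ne by (auto simp: DS_def)
qed

lemma rot_bij:
  fixes r p :: nat
  assumes "r > 0"
  shows "inj_on (\<lambda>t. (t + p) mod r) {..<r}" "(\<lambda>t. (t + p) mod r) ` {..<r} = {..<r}"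
proof -
  show inj: "inj_on (\<lambda>t. (t + p) mod r) {..<r}"
  proof
    fix a b assume ab: "a \<in> {..<r}" "b \<in> {..<r}" "(a + p) mod r = (b + p) mod r"
    then have "[a + p = b + p] (mod r)" by (simp add: cong_def)
    then have "[a = b] (mod r)" by (simp add: cong_add_rcancel_nat)
    then show "a = b" using ab by (simp add: cong_def)
  qed
  show "(\<lambda>t. (t + p) mod r) ` {..<r} = {..<r}"
    by (rule endo_inj_surj) (use inj assms in auto)
qed

lemma DS_rotate_image:
  fixes xs :: "real list"
  assumes "xs \<noteq> []"
  shows "DS xs = (\<lambda>t. (t + p) mod length xs) ` DS (rotate p xs)"
    "inj_on (\<lambda>t. (t + p) mod length xs) (DS (rotate p xs))"
proof -
  let ?r = "length xs" and ?h = "\<lambda>t. (t + p) mod length xs"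
  have r: "?r > 0" using assms by simp
  have sub: "DS (rotate p xs) \<subseteq> {..<?r}" using DS_sub[of "rotate p xs"] by simp
  show "inj_on ?h (DS (rotate p xs))"
    using rot_bij(1)[OF r] sub inj_on_subset by blast
  show "DS xs = ?h ` DS (rotate p xs)"
  proof
    show "?h ` DS (rotate p xs) \<subseteq> DS xs"
      using sub rot_mem by auto
    show "DS xs \<subseteq> ?h ` DS (rotate p xs)"
    proof
      fix s assume s: "s \<in> DS xs"
      then have "s < ?r" using DS_sub by auto
      then have "s \<in> ?h ` {..<?r}" using rot_bij(2)[OF r, of p] by simp
      then obtain t where t: "t < ?r" "s = ?h t" by blast
      then have "t \<in> DS (rotate p xs)" using rot_mem[of t xs p] s by simp
      then show "s \<in> ?h ` DS (rotate p xs)" using t by auto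
    qed
  qed
qed

lemma card_DS_rotate:
  fixes xs :: "real list"
  shows "card (DS (rotate p xs)) = card (DS xs)"
proof (cases "xs = []")
  case True then show ?thesis by simp
next
  case False
  show ?thesis using DS_rotate_image[OF False, of p] card_image by metis
qed

lemma Qv_rotate:
  fixes xs :: "real list"
  shows "[int (Qv (rotate p xs)) = int (Qv xs) - int p * int (card (DS xs))] (mod int (length xs))"
proof (cases "xs = []")
  case True then show ?thesis by (simp add: Qv_def DS_def)
next
  case False
  let ?r = "length xs" and ?h = "\<lambda>t. (t + p) mod length xs"
  have "Qv xs = (\<Sum>t\<in>DS (rotate p xs). ?h t)"
    unfolding Qv_def
  proof -
    have "(\<Sum>t\<in>DS xs. t) = (\<Sum>t\<in>?h ` DS (rotate p xs). t)"
      by (subst DS_rotate_image(1)[OF False, of p]) (rule refl)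
    also have "\<dots> = (\<Sum>t\<in>DS (rotate p xs). ?h t)"
      using sum.reindex[OF DS_rotate_image(2)[OF False, of p], of "\<lambda>t. t"] by simp
    finally show "(\<Sum>t\<in>DS xs. t) = (\<Sum>t\<in>DS (rotate p xs). ?h t)" .
  qed
  then have "int (Qv xs) = (\<Sum>t\<in>DS (rotate p xs). int (?h t))" by simp
  moreover have "[(\<Sum>t\<in>DS (rotate p xs). int (?h t)) = (\<Sum>t\<in>DS (rotate p xs). int t + int p)] (mod int ?r)"
    by (rule cong_sum) (simp add: cong_def zmod_int)
  ultimately have H: "[int (Qv xs) = int (Qv (rotate p xs)) + int p * int (card (DS (rotate p xs)))] (mod int ?r)"
    unfolding Qv_def by (simp add: sum.distrib mult.commute)
  have cd: "card (DS (rotate p xs)) = card (DS xs)" by (rule card_DS_rotate)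
  have "[int (Qv xs) - int p * int (card (DS xs)) = int (Qv (rotate p xs)) + int p * int (card (DS xs)) - int p * int (card (DS xs))] (mod int ?r)"
    using H cd by (intro cong_diff cong_refl) simp_all
  then have "[int (Qv xs) - int p * int (card (DS xs)) = int (Qv (rotate p xs))] (mod int ?r)"
    by simp
  then show ?thesis by (rule cong_sym)
qed

lemma count_card: "count (mset xs) x = card {i. i < length xs \<and> xs ! i = x}"
proof (induction xs rule: rev_induct)
  case Nil then show ?case by simp
next
  case (snoc y xs)
  have eq: "{i. i < length (xs @ [y]) \<and> (xs @ [y]) ! i = x}
      = {i. i < length xs \<and> xs ! i = x} \<union> (if y = x then {length xs} else {})"
    by (auto simp: nth_append less_Suc_eq)
  have fin: "finite {i. i < length xs \<and> xs ! i = x}" by simp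
  show ?case unfolding eq using snoc fin by (auto simp: card_insert_if)
qed

lemma lb_aux:
  fixes ys :: "real list"
  assumes ne: "ys \<noteq> []" and last: "length ys - 1 \<in> DS ys"
  shows "count (mset ys) b \<le> card (DS ys)"
proof -
  let ?r = "length ys"
  define \<phi> where "\<phi> s = (LEAST t. s \<le> t \<and> t \<in> DS ys)" for s
  let ?O = "{i. i < ?r \<and> ys ! i = b}"
  have ex: "s < ?r \<Longrightarrow> s \<le> \<phi> s \<and> \<phi> s \<in> DS ys" for s
    unfolding \<phi>_def by (rule LeastI[of _ "?r - 1"]) (use last in auto)
  have inj: "inj_on \<phi> ?O"
  proof (rule inj_onI, rule ccontr)
    have key: "False" if s: "s \<in> ?O" "s' \<in> ?O" "\<phi> s = \<phi> s'" "s < s'" for s s'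
    proof -
      have t: "s' \<le> \<phi> s" using ex[of s'] s by auto
      have ch: "\<forall>u. s \<le> u \<and> u < s' \<longrightarrow> ys ! u < ys ! Suc u"
      proof (intro allI impI)
        fix u assume u: "s \<le> u \<and> u < s'"
        then have "u < \<phi> s" using t by simp
        then have "\<not> (s \<le> u \<and> u \<in> DS ys)" unfolding \<phi>_def by (rule not_less_Least)
        then have "u \<notin> DS ys" using u by simp
        moreover have "Suc u < ?r" using u s by auto
        ultimately show "ys ! u < ys ! Suc u" by (auto simp: DS_def not_le)
      qed
      have "ys ! s < ys ! s'" by (rule chain_less) (use s ch in auto)
      then show False using s by simp
    qed
    fix s s' assume "s \<in> ?O" "s' \<in> ?O" "\<phi> s = \<phi> s'" "s \<noteq> s'"
    then show False using key[of s s'] key[of s' s] by (metis linorder_neqE_nat)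
  qed
  have img: "\<phi> ` ?O \<subseteq> DS ys" using ex by auto
  have "card ?O \<le> card (DS ys)"
    using card_inj_on_le[OF inj img] by simp
  then show ?thesis by (simp add: count_card)
qed

lemma mset_rot: "mset (rotate n xs) = mset xs"
proof -
  have "mset (rotate n xs) = mset (drop (n mod length xs) xs) + mset (take (n mod length xs) xs)"
    by (simp add: rotate_drop_take)
  also have "\<dots> = mset (take (n mod length xs) xs @ drop (n mod length xs) xs)"
    by (metis add.commute mset_append)
  finally show ?thesis by (simp only: append_take_drop_id)
qed

lemma lower_bound:
  fixes xs :: "real list"
  assumes ne: "xs \<noteq> []"
  shows "count (mset xs) b \<le> card (DS xs)"
proof -
  obtain d where d: "d \<in> DS xs" using DS_nonempty[OF ne] by blast
  let ?r = "length xs"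
  have dr: "d < ?r" using d DS_sub by auto
  let ?ys = "rotate (d + 1) xs"
  have "(?r - 1 + (d + 1)) mod ?r = d" using dr
    by (metis Suc_pred' add.commute add_Suc_right less_nat_zero_code mod_add_self2 mod_less not_gr_zero plus_1_eq_Suc)
  then have "?r - 1 \<in> DS ?ys" using rot_mem[of "?r - 1" xs "d + 1"] d dr by simp
  then have "count (mset ?ys) b \<le> card (DS ?ys)"
    using lb_aux[of ?ys b] ne by simp
  moreover have "count (mset ?ys) b = count (mset xs) b" by (simp only: mset_rot)
  moreover have "card (DS ?ys) = card (DS xs)" by (rule card_DS_rotate)
  ultimately show ?thesis by simp
qed

lemma blocks_desc:
  fixes bs :: "real list list"
  assumes "\<forall>b\<in>set bs. b \<noteq> [] \<and> sorted_wrt (<) b"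
    "Suc t < length (concat bs)" "concat bs ! t \<ge> concat bs ! Suc t"
  shows "\<exists>k. 1 \<le> k \<and> k < length bs \<and> Suc t = length (concat (take k bs))"
  using assms
proof (induction bs arbitrary: t)
  case Nil then show ?case by simp
next
  case (Cons b bs)
  have sb: "sorted_wrt (<) b" using Cons.prems by simp
  consider "Suc t < length b" | "Suc t = length b" | "Suc t > length b" by linarith
  then show ?case
  proof cases
    case 1
    then have "concat (b # bs) ! t = b ! t" "concat (b # bs) ! Suc t = b ! Suc t"
      by (auto simp: nth_append)
    moreover have "b ! t < b ! Suc t" using sb 1 sorted_wrt_nth_less by blast
    ultimately show ?thesis using Cons.prems by simp
  next
    case 2
    then have "concat bs \<noteq> []" using Cons.prems by auto
    then have "bs \<noteq> []" by auto
    then show ?thesis using 2 by (intro exI[of _ 1]) auto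
  next
    case 3
    define t' where "t' = t - length b"
    have tt: "t = length b + t'" using 3 t'_def by simp
    have "concat (b # bs) ! t = concat bs ! t'" "concat (b # bs) ! Suc t = concat bs ! Suc t'"
      using tt by (auto simp: nth_append)
    then have "concat bs ! t' \<ge> concat bs ! Suc t'" "Suc t' < length (concat bs)"
      using Cons.prems tt by auto
    then obtain k where k: "1 \<le> k" "k < length bs" "Suc t' = length (concat (take k bs))"
      using Cons.IH Cons.prems(1) by auto
    show ?thesis using k tt by (intro exI[of _ "Suc k"]) auto
  qed
qed

lemma blocks_DS:
  fixes bs :: "real list list"
  assumes "\<forall>b\<in>set bs. b \<noteq> [] \<and> sorted_wrt (<) b" "bs \<noteq> []"
  shows "DS (concat bs) \<subseteq> (\<lambda>k. length (concat (take k bs)) - 1) ` {1..length bs}"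
proof
  fix t assume t: "t \<in> DS (concat bs)"
  let ?r = "length (concat bs)"
  have tr: "t < ?r" using t DS_sub by auto
  show "t \<in> (\<lambda>k. length (concat (take k bs)) - 1) ` {1..length bs}"
  proof (cases "Suc t < ?r")
    case True
    then have "concat bs ! t \<ge> concat bs ! Suc t" using t by (simp add: DS_def)
    then obtain k where "1 \<le> k" "k < length bs" "Suc t = length (concat (take k bs))"
      using blocks_desc[OF assms(1) True] by auto
    then show ?thesis by (intro image_eqI[of _ _ k]) auto
  next
    case False
    then have "t = length (concat (take (length bs) bs)) - 1" using tr by simp
    moreover have "length bs \<in> {1..length bs}" using assms(2) by (simp add: Suc_leI)
    ultimately show ?thesis by blast
  qed
qed

lemma blocks_exact:
  fixes bs :: "real list list"
  assumes bl: "\<forall>b\<in>set bs. b \<noteq> [] \<and> sorted_wrt (<) b" and ne: "bs \<noteq> []"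
    and cnt: "count (mset (concat bs)) c = length bs"
  shows "card (DS (concat bs)) = length bs"
    "Qv (concat bs) = (\<Sum>k\<in>{1..length bs}. length (concat (take k bs)) - 1)"
proof -
  let ?P = "\<lambda>k. length (concat (take k bs)) - 1"
  let ?E = "?P ` {1..length bs}"
  have sub: "DS (concat bs) \<subseteq> ?E" by (rule blocks_DS[OF bl ne])
  have cE: "card ?E \<le> length bs" using card_image_le[of "{1..length bs}" ?P] by simp
  have nen: "concat bs \<noteq> []" using ne bl by (cases bs) auto
  have lb: "length bs \<le> card (DS (concat bs))" using lower_bound[OF nen, of c] cnt by simp
  have cs: "card (DS (concat bs)) \<le> card ?E" by (rule card_mono) (use sub in auto)
  have eq: "DS (concat bs) = ?E" by (rule card_subset_eq) (use sub cE lb cs in auto)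
  show "card (DS (concat bs)) = length bs" using lb cs cE by simp
  have inj: "inj_on ?P {1..length bs}"
    by (rule eq_card_imp_inj_on) (use lb cs cE in auto)
  show "Qv (concat bs) = (\<Sum>k\<in>{1..length bs}. length (concat (take k bs)) - 1)"
    unfolding Qv_def eq using sum.reindex[OF inj, of "\<lambda>t. t"] by simp
qed

lemma subset_sums:
  fixes m :: nat
  shows "\<forall>N x. m \<le> N \<longrightarrow> x \<le> m * (N - m) \<longrightarrow>
     (\<exists>A. A \<subseteq> {..<N} \<and> card A = m \<and> \<Sum>A = (\<Sum>{..<m}) + x)"
proof (induction m)
  case 0 then show ?case by (auto intro!: exI[of _ "{}"])
next
  case (Suc m)
  show ?case
  proof (intro allI impI)
    fix N x assume mN: "Suc m \<le> N" and x: "x \<le> Suc m * (N - Suc m)"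
    show "\<exists>A. A \<subseteq> {..<N} \<and> card A = Suc m \<and> \<Sum>A = (\<Sum>{..<Suc m}) + x"
    proof (cases "x \<le> N - Suc m")
      case True
      let ?A = "{..<m} \<union> {m + x}"
      have "m + x \<notin> {..<m}" by simp
      then have "card ?A = Suc m" "\<Sum>?A = (\<Sum>{..<m}) + (m + x)" by auto
      moreover have "?A \<subseteq> {..<N}" using True mN by auto
      ultimately show ?thesis by (intro exI[of _ ?A]) auto
    next
      case False
      define x' where "x' = x - (N - Suc m)"
      have "x' \<le> m * ((N - 1) - m)"
      proof -
        have "x \<le> (N - Suc m) + m * (N - Suc m)" using x by simp
        then show ?thesis unfolding x'_def by (simp add: diff_le_mono)
      qed
      moreover have "m \<le> N - 1" using mN by simp
      ultimately obtain A' where A': "A' \<subseteq> {..<N - 1}" "card A' = m" "\<Sum>A' = (\<Sum>{..<m}) + x'"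
        using Suc.IH by blast
      let ?A = "insert (N - 1) A'"
      have nin: "N - 1 \<notin> A'" using A' by auto
      have fin: "finite A'" using A' finite_subset by blast
      have "card ?A = Suc m" using nin fin A' by simp
      moreover have "\<Sum>?A = (N - 1) + (\<Sum>{..<m}) + x'" using nin fin A' by simp
      moreover have "?A \<subseteq> {..<N}" using A' mN by auto
      moreover have "(N - 1) + (\<Sum>{..<m}) + x' = (\<Sum>{..<Suc m}) + x"
        using False mN unfolding x'_def by simp
      ultimately show ?thesis by (intro exI[of _ ?A]) auto
    qed
  qed
qed

lemma swap_sum:
  fixes f :: "nat \<Rightarrow> int"
  shows "(\<Sum>k\<in>{1..N}. \<Sum>j<k. f j) = (\<Sum>j<N. f j * (int N - int j))"
proof (induction N)
  case 0 then show ?case by simp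
next
  case (Suc N)
  have "(\<Sum>k\<in>{1..Suc N}. \<Sum>j<k. f j) = (\<Sum>k\<in>{1..N}. \<Sum>j<k. f j) + (\<Sum>j<Suc N. f j)"
    by simp
  also have "\<dots> = (\<Sum>j<N. f j * (int N - int j)) + (\<Sum>j<N. f j) + f N"
    using Suc by simp
  also have "\<dots> = (\<Sum>j<N. f j * (int N - int j) + f j) + f N"
    by (simp add: sum.distrib)
  also have "\<dots> = (\<Sum>j<Suc N. f j * (int (Suc N) - int j))"
    by (simp add: algebra_simps)
  finally show ?case .
qed

lemma count_concat_map:
  "count (mset (concat (map h [0..<N]))) v = (\<Sum>k<N. count (mset (h k)) v)"
  by (induction N) auto

lemma length_concat_map:
  "length (concat (map h [0..<k])) = (\<Sum>j<k. length (h j))"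
  by (induction k) auto

lemma sum_indicator_card:
  fixes N :: nat
  shows "(\<Sum>k<N. if P k then 1 else 0 :: nat) = card {k. k < N \<and> P k}"
proof -
  have "(\<Sum>k<N. if P k then 1 else 0 :: nat) = (\<Sum>k\<in>{k \<in> {..<N}. P k}. 1)"
    using sum.inter_filter[of "{..<N}" "\<lambda>_. 1::nat" P] by simp
  also have "\<dots> = card {k. k < N \<and> P k}" by simp
  finally show ?thesis .
qed

lemma count_distinct: "distinct xs \<Longrightarrow> count (mset xs) v = (if v \<in> set xs then 1 else 0)"
  by (induction xs) auto

lemma construction:
  fixes D :: "real multiset" and \<alpha> \<beta> :: real and A :: "nat set" and N :: nat
  assumes aD: "\<alpha> \<in># D" and bD: "count D \<beta> = N" and bound: "\<forall>v. count D v \<le> N"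
    and am: "count D \<alpha> < N" and AN: "A \<subseteq> {..<N}" and cA: "card A = count D \<alpha>"
  defines "S \<equiv> (\<lambda>k. {v \<in> set_mset D. if v = \<alpha> then k \<in> A else k < count D v})"
  defines "bs \<equiv> map (\<lambda>k. sorted_list_of_set (S k)) [0..<N]"
  shows "mset (concat bs) = D \<and> card (DS (concat bs)) = N \<and>
         int (Qv (concat bs)) = (\<Sum>k\<in>{1..N}. \<Sum>j<k. int (card {v \<in> set_mset D - {\<alpha>}. j < count D v}))
            - int N + int (count D \<alpha>) * int N - int (\<Sum>A)"
proof -
  have ba: "\<beta> \<noteq> \<alpha>" using bD am by auto
  have N0: "N > 0" using am by simp
  have bDD: "\<beta> \<in># D" using bD N0 by (simp add: count_greater_zero_iff[symmetric])
  have finS: "finite (S k)" for k unfolding S_def by simp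
  have bS: "k < N \<Longrightarrow> \<beta> \<in> S k" for k unfolding S_def using ba bDD bD by simp
  have bl: "\<forall>b\<in>set bs. b \<noteq> [] \<and> sorted_wrt (<) b"
  proof
    fix b assume "b \<in> set bs"
    then obtain k where k: "k < N" "b = sorted_list_of_set (S k)" unfolding bs_def by auto
    have "S k \<noteq> {}" using bS[OF k(1)] by auto
    then show "b \<noteq> [] \<and> sorted_wrt (<) b" using k finS by (simp add: strict_sorted_list_of_set)
  qed
  have bsne: "bs \<noteq> []" unfolding bs_def using N0 by simp
  have lbs: "length bs = N" unfolding bs_def by simp
  have msetD: "mset (concat bs) = D"
  proof (rule multiset_eqI)
    fix v
    have "count (mset (concat bs)) v = (\<Sum>k<N. count (mset (sorted_list_of_set (S k))) v)"
      unfolding bs_def by (rule count_concat_map)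
    also have "\<dots> = (\<Sum>k<N. if v \<in> S k then 1 else 0)"
      using finS by (simp add: count_distinct)
    also have "\<dots> = card {k. k < N \<and> v \<in> S k}" by (rule sum_indicator_card)
    also have "\<dots> = count D v"
    proof (cases "v \<in># D")
      case False
      then show ?thesis unfolding S_def by (simp add: not_in_iff)
    next
      case True
      show ?thesis
      proof (cases "v = \<alpha>")
        case va: True
        have "{k. k < N \<and> v \<in> S k} = A" unfolding S_def using True va AN by auto
        then show ?thesis using cA va by simp
      next
        case False
        have "{k. k < N \<and> v \<in> S k} = {..<count D v}" unfolding S_def using True False bound
          by (auto intro: less_le_trans)
        then show ?thesis by simp
      qed
    qed
    finally show "count (mset (concat bs)) v = count D v" .
  qed
  have cnt: "count (mset (concat bs)) \<beta> = length bs" using msetD bD lbs by simp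
  note ex = blocks_exact[OF bl bsne cnt]
  define c where "c j = card {v \<in> set_mset D - {\<alpha>}. j < count D v}" for j
  have cardS: "card (S j) = c j + (if j \<in> A then 1 else 0)" for j
  proof -
    have "S j = {v \<in> set_mset D - {\<alpha>}. j < count D v} \<union> (if j \<in> A then {\<alpha>} else {})"
      unfolding S_def using aD by auto
    then show ?thesis unfolding c_def by (auto simp: card_insert_if)
  qed
  have P: "length (concat (take k bs)) = (\<Sum>j<k. card (S j))" if "k \<le> N" for k
  proof -
    have "take k bs = map (\<lambda>k. sorted_list_of_set (S k)) [0..<k]"
      unfolding bs_def using that by (simp add: take_map)
    then show ?thesis using finS by (simp add: length_concat_map)
  qed
  have P1: "length (concat (take k bs)) \<ge> 1" if "1 \<le> k" "k \<le> N" for k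
  proof -
    have "card (S 0) \<ge> 1" using bS[OF N0] finS[of 0] card_0_eq[of "S 0"] by fastforce
    moreover have "card (S 0) \<le> (\<Sum>j<k. card (S j))"
      using that by (intro member_le_sum) auto
    ultimately show ?thesis using P[OF that(2)] by simp
  qed
  have "int (Qv (concat bs)) = (\<Sum>k\<in>{1..N}. int (length (concat (take k bs))) - 1)"
    using ex(2) P1 lbs by (simp add: of_nat_diff)
  also have "\<dots> = (\<Sum>k\<in>{1..N}. (\<Sum>j<k. int (c j)) + (\<Sum>j<k. (if j \<in> A then 1 else 0)) - 1)"
    apply (intro sum.cong refl)
    apply (simp add: P cardS sum.distrib of_nat_sum)
    apply (intro sum.cong refl)
    apply auto
    done
  also have "\<dots> = (\<Sum>k\<in>{1..N}. \<Sum>j<k. int (c j)) + (\<Sum>k\<in>{1..N}. \<Sum>j<k. (if j \<in> A then 1 else 0)) - int N"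
    by (simp add: sum.distrib sum_subtractf)
  also have "(\<Sum>k\<in>{1..N}. \<Sum>j<k. (if j \<in> A then 1 else 0 :: int)) = (\<Sum>j<N. (if j \<in> A then 1 else 0) * (int N - int j))"
    by (rule swap_sum)
  also have "\<dots> = (\<Sum>j\<in>A. int N - int j)"
  proof -
    have "(\<Sum>j<N. (if j \<in> A then 1 else 0) * (int N - int j)) = (\<Sum>j<N. if j \<in> A then int N - int j else 0)"
      by (intro sum.cong) auto
    also have "\<dots> = (\<Sum>j\<in>{j \<in> {..<N}. j \<in> A}. int N - int j)"
      using sum.inter_filter[of "{..<N}" "\<lambda>j. int N - int j" "\<lambda>j. j \<in> A"] by simp
    also have "{j \<in> {..<N}. j \<in> A} = A" using AN by auto
    finally show ?thesis .
  qed
  also have "\<dots> = int (count D \<alpha>) * int N - int (\<Sum>A)"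
    using cA by (simp add: sum_subtractf of_nat_sum)
  finally show ?thesis using msetD ex(1) lbs unfolding c_def by simp
qed

lemma nu_facts:
  assumes "D \<noteq> {#}"
  shows "\<exists>\<beta>. count D \<beta> = nu D" "\<forall>v. count D v \<le> nu D"
proof -
  have fin: "finite (count D ` set_mset D)" by simp
  have ne: "count D ` set_mset D \<noteq> {}" using assms by simp
  have "nu D \<in> count D ` set_mset D" unfolding nu_def using assms Max_in[OF fin ne] by simp
  then show "\<exists>\<beta>. count D \<beta> = nu D" by auto
  show "\<forall>v. count D v \<le> nu D"
  proof
    fix v show "count D v \<le> nu D"
    proof (cases "v \<in># D")
      case True then show ?thesis unfolding nu_def using assms fin by simp
    next
      case False then show ?thesis by (simp add: not_in_iff)
    qed
  qed
qed

lemma finite_arrs: "finite {xs. mset xs = (D :: real multiset)}"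
proof -
  have "{xs. mset xs = D} \<subseteq> {xs. set xs \<subseteq> set_mset D \<and> length xs = size D}" by auto
  moreover have "finite {xs. set xs \<subseteq> set_mset D \<and> length xs = size D}"
    by (rule finite_lists_length_eq) simp
  ultimately show ?thesis using finite_subset by blast
qed

lemma good_of:
  fixes D :: "real multiset"
  assumes ys: "mset ys = D" and ne: "D \<noteq> {#}" and c: "card (DS ys) = nu D"
  shows "good_arrangement D ys"
proof -
  obtain \<beta> where b: "count D \<beta> = nu D" using nu_facts[OF ne] by blast
  have "T_min D = descents ys"
    unfolding T_min_def
  proof (rule Min_eqI)
    show "finite (descents ` {xs. mset xs = D})" using finite_arrs by simp
    show "descents ys \<in> descents ` {xs. mset xs = D}" using ys by simp
    fix y assume "y \<in> descents ` {xs. mset xs = D}"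
    then obtain xs where xs: "mset xs = D" "y = descents xs" by auto
    have "xs \<noteq> []" using xs ne by auto
    then have "count (mset xs) \<beta> \<le> card (DS xs)" by (rule lower_bound)
    then show "descents ys \<le> y" using xs b c by (simp add: descents_DS)
  qed
  then show ?thesis unfolding good_arrangement_def using ys by simp
qed

lemma good_exists: "\<exists>xs. good_arrangement (D :: real multiset) xs"
proof -
  have fin: "finite (descents ` {xs. mset xs = D})" using finite_arrs by simp
  have ne: "descents ` {xs. mset xs = D} \<noteq> {}" using ex_mset[of D] by auto
  obtain xs where "mset xs = D" "T_min D = descents xs"
    using Min_in[OF fin ne] unfolding T_min_def by auto
  then show ?thesis unfolding good_arrangement_def by auto
qed

lemma nat_ineq: "1 \<le> m \<Longrightarrow> m < N \<Longrightarrow> N - 1 \<le> m * (N - m)" for m N :: nat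
proof -
  assume a: "1 \<le> m" "m < N"
  have "m * (N - m) = (N - m) + (m - 1) * (N - m)" using a
    by (metis add.commute le_add_diff_inverse mult.commute mult_Suc_right plus_1_eq_Suc)
  moreover have "(m - 1) * (N - m) \<ge> (m - 1) * 1" using a by (intro mult_le_mono2) simp
  ultimately show ?thesis using a by linarith
qed

lemma key:
  fixes D :: "real multiset" and X :: int and \<alpha> :: real
  assumes aD: "\<alpha> \<in># D" and am: "count D \<alpha> < nu D"
  shows "\<exists>ys. good_arrangement D ys \<and> [int (Qv ys) = X] (mod int (size D))"
proof -
  define N where "N = nu D"
  define m where "m = count D \<alpha>"
  have neD: "D \<noteq> {#}" using aD by auto
  obtain \<beta> where b: "count D \<beta> = N" using nu_facts[OF neD] N_def by blast
  have bound: "\<forall>v. count D v \<le> N" using nu_facts[OF neD] N_def by blast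
  have m1: "1 \<le> m" using aD m_def by (simp add: Suc_le_eq)
  have mN: "m < N" using am m_def N_def by simp
  define C0 where "C0 = (\<Sum>k\<in>{1..N}. \<Sum>j<k. int (card {v \<in> set_mset D - {\<alpha>}. j < count D v}))
            - int N + int m * int N"
  define x where "x = nat ((C0 - int (\<Sum>{..<m}) - X) mod int N)"
  have N0: "N > 0" using mN by simp
  have xN: "x < N" unfolding x_def using N0 by (simp add: nat_less_iff)
  have xle: "x \<le> m * (N - m)" using xN nat_ineq[OF m1 mN] by linarith
  obtain A where A: "A \<subseteq> {..<N}" "card A = m" "\<Sum>A = (\<Sum>{..<m}) + x"
    using subset_sums[of m] mN xle by (meson less_imp_le)
  obtain zs where zs: "mset zs = D" "card (DS zs) = N" "int (Qv zs) = C0 - int (\<Sum>A)"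
    using construction[OF aD b bound, of A] am A N_def m_def C0_def by auto
  have xcong: "int x = (C0 - int (\<Sum>{..<m}) - X) mod int N" unfolding x_def using N0 by simp
  have "int N dvd (int (Qv zs) - X)"
  proof -
    have "int (Qv zs) - X = (C0 - int (\<Sum>{..<m}) - X) - int x" using zs(3) A(3) by simp
    also have "\<dots> = int N * ((C0 - int (\<Sum>{..<m}) - X) div int N)"
      using xcong by (metis add_diff_cancel_right' mult_div_mod_eq)
    finally show ?thesis by simp
  qed
  then obtain y where y: "int (Qv zs) - X = int N * y" by (elim dvdE)
  define r where "r = size D"
  have lz: "length zs = r" using zs(1) r_def by (metis size_mset)
  define p where "p = nat (y mod int r)"
  have r0: "r > 0" using neD r_def by (simp add: nonempty_has_size)
  have py: "[int p = y] (mod int r)" unfolding p_def using r0 by (simp add: cong_def)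
  let ?ys = "rotate p zs"
  have "[int (Qv ?ys) = int (Qv zs) - int p * int N] (mod int r)"
    using Qv_rotate[of p zs] zs(2) lz by simp
  moreover have "[int (Qv zs) - int p * int N = int (Qv zs) - y * int N] (mod int r)"
    using py by (intro cong_diff cong_refl cong_mult) auto
  moreover have "int (Qv zs) - y * int N = X" using y by (simp add: algebra_simps)
  ultimately have "[int (Qv ?ys) = X] (mod int r)" using cong_trans by metis
  moreover have "good_arrangement D ?ys"
    by (rule good_of) (use zs neD N_def card_DS_rotate mset_rot in auto)
  ultimately show ?thesis using r_def by blast
qed

lemma swap_sum2:
  fixes f :: "nat \<Rightarrow> int"
  shows "(\<Sum>j<N. \<Sum>l<j. f l) = (\<Sum>l<N. f l * (int N - 1 - int l))"
proof (induction N)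
  case 0 then show ?case by simp
next
  case (Suc N)
  have "(\<Sum>j<Suc N. \<Sum>l<j. f l) = (\<Sum>l<N. f l * (int N - 1 - int l)) + (\<Sum>l<N. f l)"
    using Suc by simp
  also have "\<dots> = (\<Sum>l<N. f l * (int N - 1 - int l) + f l)" by (simp add: sum.distrib)
  also have "\<dots> = (\<Sum>l<Suc N. f l * (int (Suc N) - 1 - int l))"
    by (simp add: algebra_simps)
  finally show ?case .
qed

lemma sum_list_map_upt: "sum_list (map f [0..<n]) = (\<Sum>i<n. f i)"
  by (induction n) auto

lemma weighted_tau:
  fixes a :: "nat \<Rightarrow> real list" and w :: "nat \<Rightarrow> int"
  assumes len: "\<forall>i<n. length (a i) = r"
  shows "(\<Sum>l<r. w l * int (tau n r a l)) = (\<Sum>i<n. \<Sum>l\<in>DS (a i). w l)"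
proof -
  have t: "int (tau n r a l) = (\<Sum>i<n. if l \<in> DS (a i) then 1 else 0)" if l: "l < r" for l
  proof -
    have "{i. i < n \<and> a i ! l \<ge> a i ! ((l + 1) mod r)} = {i. i < n \<and> l \<in> DS (a i)}"
      using len l by (auto simp: DS_def)
    then have "tau n r a l = card {i. i < n \<and> l \<in> DS (a i)}" by (simp add: tau_def)
    also have "\<dots> = (\<Sum>i<n. if l \<in> DS (a i) then 1 else 0)" by (rule sum_indicator_card[symmetric])
    finally show ?thesis by (simp add: of_nat_sum if_distrib cong: if_cong)
  qed
  have "(\<Sum>l<r. w l * int (tau n r a l)) = (\<Sum>l<r. \<Sum>i<n. if l \<in> DS (a i) then w l else 0)"
    by (intro sum.cong refl) (simp add: t sum_distrib_left if_distrib cong: if_cong)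
  also have "\<dots> = (\<Sum>i<n. \<Sum>l<r. if l \<in> DS (a i) then w l else 0)" by (rule sum.swap)
  also have "\<dots> = (\<Sum>i<n. \<Sum>l\<in>DS (a i). w l)"
  proof -
    have inner: "(\<Sum>l<r. if l \<in> DS (a i) then w l else 0) = (\<Sum>l\<in>DS (a i). w l)" if i: "i < n" for i
    proof -
      have "(\<Sum>l<r. if l \<in> DS (a i) then w l else 0) = (\<Sum>l\<in>{l \<in> {..<r}. l \<in> DS (a i)}. w l)"
        using sum.inter_filter[of "{..<r}" w "\<lambda>l. l \<in> DS (a i)"] by simp
      also have "{l \<in> {..<r}. l \<in> DS (a i)} = DS (a i)" using DS_sub[of "a i"] len i by auto
      finally show ?thesis .
    qed
    show ?thesis by (rule sum.cong[OF refl]) (rule inner, simp)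
  qed
  finally show ?thesis .
qed

lemma exists_nonuniform:
  fixes g :: "nat \<Rightarrow> real multiset"
  assumes deg: "\<forall>i<n. size (g i) = r" and sp: "superdefect n r g > 0"
  shows "\<exists>i0<n. \<exists>\<alpha>. \<alpha> \<in># g i0 \<and> count (g i0) \<alpha> < nu (g i0)"
proof (rule ccontr)
  assume H: "\<not> ?thesis"
  have "int r ^ 2 - (\<Sum>\<alpha>\<in>set_mset (g i). int (count (g i) \<alpha>) ^ 2) - int r * (int r - int (nu (g i))) = 0"
    if i: "i < n" for i
  proof (cases "g i = {#}")
    case True
    then show ?thesis using deg i by (simp add: nu_def power2_eq_square)
  next
    case False
    have eqc: "\<forall>\<alpha>\<in>set_mset (g i). count (g i) \<alpha> = nu (g i)"
      using H i nu_facts[OF False] by (metis le_neq_implies_less)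
    have "(\<Sum>\<alpha>\<in>set_mset (g i). int (count (g i) \<alpha>) ^ 2)
        = (\<Sum>\<alpha>\<in>set_mset (g i). int (nu (g i)) * int (count (g i) \<alpha>))"
      using eqc by (intro sum.cong refl) (simp add: power2_eq_square)
    also have "\<dots> = int (nu (g i)) * int (\<Sum>\<alpha>\<in>set_mset (g i). count (g i) \<alpha>)"
      by (simp add: sum_distrib_left of_nat_sum)
    also have "(\<Sum>\<alpha>\<in>set_mset (g i). count (g i) \<alpha>) = r"
      using deg i size_multiset_overloaded_eq[of "g i"] by simp
    finally show ?thesis by (simp add: algebra_simps power2_eq_square)
  qed
  then have "superdefect n r g = 0" unfolding superdefect_def by simp
  then show False using sp by simp
qed

theorem theorem6p9:
  fixes n r :: nat and g :: "nat \<Rightarrow> real multiset"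
  assumes deg: "\<forall>i<n. size (g i) = r"
    and range: "\<forall>i<n. \<forall>\<alpha>\<in>#g i. 0 \<le> \<alpha> \<and> \<alpha> < 1"
    and integral: "(\<Sum>i<n. \<Sum>\<^sub># (g i)) \<in> \<int>"
    and defect0: "defect n r g = 0"
    and superpos: "superdefect n r g > 0"
  shows "\<exists>a :: nat \<Rightarrow> real list. \<exists>k :: nat \<Rightarrow> int.
           (\<forall>i<n. good_arrangement (g i) (a i))
         \<and> (\<forall>j. Suc j < r \<longrightarrow> k (Suc j) = int (tau n r a j) + k j + 2 - int n)
         \<and> par_deg_sum n r k a = 0"
proof -
  obtain i0 \<alpha> where i0: "i0 < n" "\<alpha> \<in># g i0" "count (g i0) \<alpha> < nu (g i0)"
    using exists_nonuniform[OF deg superpos] by blast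
  obtain s :: int where s: "(\<Sum>i<n. \<Sum>\<^sub># (g i)) = of_int s" using integral Ints_cases by metis
  define b where "b i = (SOME xs. good_arrangement (g i) xs)" for i
  have gb: "good_arrangement (g i) (b i)" for i unfolding b_def using good_exists someI_ex by metis
  define G :: int where "G = (\<Sum>l<r. int l)"
  define X where "X = s - (2 - int n) * G - (\<Sum>i\<in>{..<n} - {i0}. int (Qv (b i)))"
  have szr: "size (g i0) = r" using deg i0 by simp
  obtain ys where ys: "good_arrangement (g i0) ys" "[int (Qv ys) = X] (mod int r)"
    using key[OF i0(2) i0(3), of X] szr by auto
  define a where "a = b(i0 := ys)"
  have ga: "\<forall>i<n. good_arrangement (g i) (a i)" using gb ys unfolding a_def by auto
  have len: "\<forall>i<n. length (a i) = r"
    using ga deg unfolding good_arrangement_def by (metis size_mset)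
  define K where "K = (\<Sum>i<n. int (Qv (a i))) + (2 - int n) * G - s"
  have sumQ: "(\<Sum>i<n. int (Qv (a i))) = int (Qv ys) + (\<Sum>i\<in>{..<n} - {i0}. int (Qv (b i)))"
  proof -
    have "(\<Sum>i<n. int (Qv (a i))) = int (Qv (a i0)) + (\<Sum>i\<in>{..<n} - {i0}. int (Qv (a i)))"
      using i0(1) by (simp add: sum.remove)
    also have "(\<Sum>i\<in>{..<n} - {i0}. int (Qv (a i))) = (\<Sum>i\<in>{..<n} - {i0}. int (Qv (b i)))"
      unfolding a_def by (intro sum.cong refl) auto
    finally show ?thesis unfolding a_def by simp
  qed
  have KX: "K = int (Qv ys) - X" unfolding K_def X_def sumQ by simp
  have rK: "int r dvd K" using ys(2) KX by (simp add: cong_iff_dvd_diff dvd_diff_commute)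
  define c where "c l = int (tau n r a l) + 2 - int n" for l
  define k0 where "k0 = K div int r"
  have rk0: "int r * k0 = K" using rK unfolding k0_def by simp
  define k where "k j = k0 + (\<Sum>l<j. c l)" for j
  have rec: "\<forall>j. Suc j < r \<longrightarrow> k (Suc j) = int (tau n r a j) + k j + 2 - int n"
    unfolding k_def c_def by simp
  have sum_tau: "(\<Sum>l<r. int (tau n r a l)) = (\<Sum>i<n. int (T_min (g i)))"
  proof -
    have "(\<Sum>l<r. 1 * int (tau n r a l)) = (\<Sum>i<n. \<Sum>l\<in>DS (a i). 1)"
      by (rule weighted_tau[OF len])
    also have "\<dots> = (\<Sum>i<n. int (T_min (g i)))"
      using ga by (intro sum.cong refl) (auto simp: good_arrangement_def descents_DS)
    finally show ?thesis by simp
  qed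
  have sumc: "(\<Sum>l<r. c l) = 0"
  proof -
    have "(\<Sum>l<r. c l) = (\<Sum>l<r. int (tau n r a l)) + int r * (2 - int n)"
      unfolding c_def by (simp add: sum.distrib sum_subtractf algebra_simps)
    then show ?thesis using sum_tau defect0 unfolding defect_def by (simp add: algebra_simps)
  qed
  have wsum: "(\<Sum>l<r. int l * int (tau n r a l)) = (\<Sum>i<n. int (Qv (a i)))"
  proof -
    have "(\<Sum>l<r. int l * int (tau n r a l)) = (\<Sum>i<n. \<Sum>l\<in>DS (a i). int l)"
      by (rule weighted_tau[OF len])
    then show ?thesis by (simp add: Qv_def of_nat_sum)
  qed
  have lsumc: "(\<Sum>l<r. int l * c l) = (\<Sum>i<n. int (Qv (a i))) + (2 - int n) * G"
  proof -
    have "(\<Sum>l<r. int l * c l) = (\<Sum>l<r. int l * int (tau n r a l) + int l * (2 - int n))"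
      unfolding c_def by (intro sum.cong refl) (simp add: algebra_simps)
    also have "\<dots> = (\<Sum>l<r. int l * int (tau n r a l)) + (\<Sum>l<r. int l * (2 - int n))"
      by (rule sum.distrib)
    also have "(\<Sum>l<r. int l * (2 - int n)) = (2 - int n) * G"
      unfolding G_def by (simp add: sum_distrib_right mult.commute)
    finally show ?thesis using wsum by simp
  qed
  have sumk: "(\<Sum>j<r. k j) = - s"
  proof -
    have "(\<Sum>j<r. k j) = int r * k0 + (\<Sum>j<r. \<Sum>l<j. c l)"
      unfolding k_def by (simp add: sum.distrib)
    also have "(\<Sum>j<r. \<Sum>l<j. c l) = (\<Sum>l<r. c l * (int r - 1 - int l))" by (rule swap_sum2)
    also have "\<dots> = (\<Sum>l<r. (int r - 1) * c l - int l * c l)"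
      by (intro sum.cong refl) (simp add: algebra_simps)
    also have "\<dots> = (int r - 1) * (\<Sum>l<r. c l) - (\<Sum>l<r. int l * c l)"
      by (simp only: sum_subtractf sum_distrib_left)
    finally show ?thesis using sumc lsumc rk0 unfolding K_def by simp
  qed
  have vals: "(\<Sum>j<r. \<Sum>i<n. a i ! j) = of_int s"
  proof -
    have "(\<Sum>j<r. \<Sum>i<n. a i ! j) = (\<Sum>i<n. \<Sum>j<r. a i ! j)" by (rule sum.swap)
    also have "\<dots> = (\<Sum>i<n. \<Sum>\<^sub># (g i))"
    proof (intro sum.cong refl)
      fix i assume i: "i \<in> {..<n}"
      have "(\<Sum>j<r. a i ! j) = sum_list (a i)"
        using len i by (simp add: sum_list_sum_nth atLeast0LessThan)
      also have "\<dots> = \<Sum>\<^sub># (mset (a i))" by (rule sum_mset_sum_list[symmetric])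
      also have "mset (a i) = g i" using ga i unfolding good_arrangement_def by simp
      finally show "(\<Sum>j<r. a i ! j) = \<Sum>\<^sub># (g i)" .
    qed
    finally show ?thesis using s by simp
  qed
  have "par_deg_sum n r k a = (\<Sum>j<r. real_of_int (k j) + (\<Sum>i<n. a i ! j))"
    unfolding par_deg_sum_def par_deg_line_def by (simp add: sum_list_map_upt)
  also have "\<dots> = real_of_int (\<Sum>j<r. k j) + (\<Sum>j<r. \<Sum>i<n. a i ! j)"
    by (simp add: sum.distrib)
  also have "\<dots> = 0" using sumk vals by simp
  finally have "par_deg_sum n r k a = 0" .
  then show ?thesis using ga rec by blast
qed

end
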